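(* Let $z\ge 0$ and let $C_1,F_1,\dots,C_\ell,F_\ell$ be a $z$-antler-sequence for an undirected multigraph $G$. Then for every $1\le i\le\ell$, the pair $(C_1\cup\dots\cup C_i,\;F_1\cup\dots\cup F_i)$ is a $z$-antler in $G$.
   Context: A feedback vertex set (FVS) of $G$ is a set $X\subseteq V(G)$ with $G-X$ acyclic (self-loops and pairs of parallel edges count as cycles); $\mathrm{fvs}(G)$ is the minimum size of a FVS. For disjoint $X,Y$, $e(X,Y)$ is the number of edges between $X$ and $Y$. A feedback vertex cut (FVC) in $G$ is a pair of disjoint sets $C,F\subseteq V(G)$ such that $G[F]$ is a forest and every tree $T$ of $G[F]$ satisfies $e(V(T),V(G)\setminus(C\cup F))\le1$. An antler is a FVC $(C,F)$ with $|C|\le\mathrm{fvs}(G[C\cup F])$. For $C\subseteq V(G)$, a $C$-certificate is a subgraph $H$ of $G$ such that $C$ is a minimum FVS of $H$; it has order $z$ if every component $H'$ of $H$ satisfies $\mathrm{fvs}(H')=|C\cap V(H')|\le z$. A $z$-antler is an antler $(C,F)$ such that $G[C\cup F]$ contains a $C$-certificate of order $z$. A $z$-antler-sequence for $G$ is a sequence of pairwise disjoint vertex sets $C_1,F_1,\dots,C_\ell,F_\ell$ such that for each $i$, $(C_i,F_i)$ is a $z$-antler in $G-\bigcup_{j<i}(C_j\cup F_j)$. *)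

theory Defs
  imports Main
begin

text \<open>Edges are elements of a type 'e; a global map
  ends :: 'e \<Rightarrow> 'v set assigns each edge its set of end vertices
  (a singleton for a self-loop, a two-element set otherwise). A (sub)graph is
  a pair (V, E) of a vertex set and an edge set; all subgraphs of a graph
  share the same ends map, so parallel edges are distinct elements of E.\<close>

type_synonym ('v,'e) mgraph = "'v set \<times> 'e set"

definition wf_mgraph :: "('e \<Rightarrow> 'v set) \<Rightarrow> ('v,'e) mgraph \<Rightarrow> bool" where
  "wf_mgraph ends G \<longleftrightarrow> finite (fst G) \<and> finite (snd G) \<and>
     (\<forall>e\<in>snd G. ends e \<subseteq> fst G \<and> 1 \<le> card (ends e) \<and> card (ends e) \<le> 2)"

definition subgraph :: "('e \<Rightarrow> 'v set) \<Rightarrow> ('v,'e) mgraph \<Rightarrow> ('v,'e) mgraph \<Rightarrow> bool" where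
  "subgraph ends H G \<longleftrightarrow> fst H \<subseteq> fst G \<and> snd H \<subseteq> snd G \<and>
     (\<forall>e\<in>snd H. ends e \<subseteq> fst H)"

definition induced :: "('e \<Rightarrow> 'v set) \<Rightarrow> ('v,'e) mgraph \<Rightarrow> 'v set \<Rightarrow> ('v,'e) mgraph" where
  "induced ends G X = (fst G \<inter> X, {e\<in>snd G. ends e \<subseteq> X})"

definition remove :: "('e \<Rightarrow> 'v set) \<Rightarrow> ('v,'e) mgraph \<Rightarrow> 'v set \<Rightarrow> ('v,'e) mgraph" where
  "remove ends G X = induced ends G (fst G - X)"

text \<open>A cycle: k \<ge> 1 distinct vertices v_0..v_(k-1) and k distinct edges, edge i
  joining v_i and v_((i+1) mod k). For k = 1 this is a self-loop, for k = 2 a pair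
  of parallel edges.\<close>
definition is_cycle :: "('e \<Rightarrow> 'v set) \<Rightarrow> ('v,'e) mgraph \<Rightarrow> 'v list \<Rightarrow> 'e list \<Rightarrow> bool" where
  "is_cycle ends G vs es \<longleftrightarrow> length vs \<ge> 1 \<and> length es = length vs \<and>
     distinct vs \<and> distinct es \<and> set vs \<subseteq> fst G \<and> set es \<subseteq> snd G \<and>
     (\<forall>i < length vs. ends (es ! i) = {vs ! i, vs ! ((i + 1) mod length vs)})"

definition acyclic_mg :: "('e \<Rightarrow> 'v set) \<Rightarrow> ('v,'e) mgraph \<Rightarrow> bool" where
  "acyclic_mg ends G \<longleftrightarrow> \<not> (\<exists>vs es. is_cycle ends G vs es)"

definition is_fvs :: "('e \<Rightarrow> 'v set) \<Rightarrow> ('v,'e) mgraph \<Rightarrow> 'v set \<Rightarrow> bool" where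
  "is_fvs ends G X \<longleftrightarrow> X \<subseteq> fst G \<and> acyclic_mg ends (remove ends G X)"

definition fvs :: "('e \<Rightarrow> 'v set) \<Rightarrow> ('v,'e) mgraph \<Rightarrow> nat" where
  "fvs ends G = Min (card ` {X. is_fvs ends G X})"

definition adj_rel :: "('e \<Rightarrow> 'v set) \<Rightarrow> ('v,'e) mgraph \<Rightarrow> ('v \<times> 'v) set" where
  "adj_rel ends G = {(u, v). \<exists>e\<in>snd G. ends e = {u, v}}"

definition components :: "('e \<Rightarrow> 'v set) \<Rightarrow> ('v,'e) mgraph \<Rightarrow> 'v set set" where
  "components ends G = (\<lambda>u. {v \<in> fst G. (u, v) \<in> (adj_rel ends G)\<^sup>*}) ` fst G"

definition edges_between :: "('e \<Rightarrow> 'v set) \<Rightarrow> ('v,'e) mgraph \<Rightarrow> 'v set \<Rightarrow> 'v set \<Rightarrow> nat" where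
  "edges_between ends G X Y = card {e \<in> snd G. \<exists>x\<in>X. \<exists>y\<in>Y. ends e = {x, y}}"

definition is_fvc :: "('e \<Rightarrow> 'v set) \<Rightarrow> ('v,'e) mgraph \<Rightarrow> 'v set \<Rightarrow> 'v set \<Rightarrow> bool" where
  "is_fvc ends G C F \<longleftrightarrow> C \<subseteq> fst G \<and> F \<subseteq> fst G \<and> C \<inter> F = {} \<and>
     acyclic_mg ends (induced ends G F) \<and>
     (\<forall>T \<in> components ends (induced ends G F).
        edges_between ends G T (fst G - (C \<union> F)) \<le> 1)"

definition is_antler :: "('e \<Rightarrow> 'v set) \<Rightarrow> ('v,'e) mgraph \<Rightarrow> 'v set \<Rightarrow> 'v set \<Rightarrow> bool" where
  "is_antler ends G C F \<longleftrightarrow> is_fvc ends G C F \<and> card C \<le> fvs ends (induced ends G (C \<union> F))"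

definition is_certificate :: "('e \<Rightarrow> 'v set) \<Rightarrow> ('v,'e) mgraph \<Rightarrow> 'v set \<Rightarrow> nat \<Rightarrow> ('v,'e) mgraph \<Rightarrow> bool" where
  "is_certificate ends G C z H \<longleftrightarrow> subgraph ends H G \<and>
     is_fvs ends H C \<and> card C = fvs ends H \<and>
     (\<forall>K \<in> components ends H.
        fvs ends (induced ends H K) = card (C \<inter> K) \<and> card (C \<inter> K) \<le> z)"

definition is_z_antler :: "('e \<Rightarrow> 'v set) \<Rightarrow> nat \<Rightarrow> ('v,'e) mgraph \<Rightarrow> 'v set \<Rightarrow> 'v set \<Rightarrow> bool" where
  "is_z_antler ends z G C F \<longleftrightarrow> is_antler ends G C F \<and>
     (\<exists>H. is_certificate ends (induced ends G (C \<union> F)) C z H)"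

text \<open>z-antler-sequence C_1,F_1,...,C_l,F_l given as two lists of length l (0-indexed).\<close>
definition is_z_antler_seq :: "('e \<Rightarrow> 'v set) \<Rightarrow> nat \<Rightarrow> ('v,'e) mgraph \<Rightarrow> 'v set list \<Rightarrow> 'v set list \<Rightarrow> bool" where
  "is_z_antler_seq ends z G Cs Fs \<longleftrightarrow> length Cs = length Fs \<and>
     (\<forall>i < length Cs. \<forall>j < length Cs. Cs ! i \<inter> Fs ! j = {} \<and>
        (i \<noteq> j \<longrightarrow> Cs ! i \<inter> Cs ! j = {} \<and> Fs ! i \<inter> Fs ! j = {})) \<and>
     (\<forall>i < length Cs. is_z_antler ends z
        (remove ends G (\<Union>j<i. Cs ! j \<union> Fs ! j)) (Cs ! i) (Fs ! i))"

end

theory Submission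
  imports Defs
begin

lemma fst_induced[simp]: "fst (induced ends G X) = fst G \<inter> X" by (simp add: induced_def)
lemma snd_induced[simp]: "snd (induced ends G X) = {e\<in>snd G. ends e \<subseteq> X}" by (simp add: induced_def)
lemma fst_remove[simp]: "fst (remove ends G X) = fst G - X" by (auto simp add: remove_def)
lemma snd_remove[simp]: "snd (remove ends G X) = {e\<in>snd G. ends e \<subseteq> fst G - X}" by (simp add: remove_def)

lemma wf_remove: "wf_mgraph ends G \<Longrightarrow> wf_mgraph ends (remove ends G X)"
  unfolding wf_mgraph_def by auto

lemma remove_empty: "wf_mgraph ends G \<Longrightarrow> remove ends G {} = G"
  unfolding wf_mgraph_def remove_def induced_def by (cases G) auto

lemma cycle_edge_ends:
  assumes "is_cycle ends H vs es" "e \<in> set es"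
  shows "ends e \<subseteq> set vs"
proof -
  from assms obtain i where i: "i < length es" "e = es ! i" by (auto simp: in_set_conv_nth)
  have l: "length es = length vs" "length vs \<ge> 1" using assms(1) by (auto simp: is_cycle_def)
  have "ends e = {vs ! i, vs ! ((i + 1) mod length vs)}" using assms(1) i l by (auto simp: is_cycle_def)
  moreover have "(i + 1) mod length vs < length vs" using l by (intro mod_less_divisor) linarith
  ultimately show ?thesis using i l by auto
qed

lemma cycle_transfer:
  assumes "is_cycle ends H vs es" "set vs \<subseteq> fst K" "set es \<subseteq> snd K"
  shows "is_cycle ends K vs es"
  using assms by (auto simp: is_cycle_def)

lemma cycle_in: "is_cycle ends H vs es \<Longrightarrow> set vs \<subseteq> fst H \<and> set es \<subseteq> snd H"
  by (auto simp: is_cycle_def)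

lemma fvs_le:
  assumes "finite (fst H)" "is_fvs ends H X"
  shows "fvs ends H \<le> card X"
proof -
  have "{X. is_fvs ends H X} \<subseteq> Pow (fst H)" by (auto simp: is_fvs_def)
  hence "finite {X. is_fvs ends H X}" using assms(1) finite_subset by blast
  thus ?thesis unfolding fvs_def using assms(2) by auto
qed

lemma fvs_ex:
  assumes "finite (fst H)"
  shows "\<exists>X. is_fvs ends H X \<and> card X = fvs ends H"
proof -
  have "{X. is_fvs ends H X} \<subseteq> Pow (fst H)" by (auto simp: is_fvs_def)
  hence fin: "finite {X. is_fvs ends H X}" using assms(1) finite_subset by blast
  have "is_fvs ends H (fst H)"
    unfolding is_fvs_def acyclic_mg_def
  proof (intro conjI notI; (elim exE)?)
    fix vs es assume "is_cycle ends (remove ends H (fst H)) vs es"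
    thus False by (cases vs) (auto simp: is_cycle_def)
  qed simp
  hence "card ` {X. is_fvs ends H X} \<noteq> {}" by auto
  hence "fvs ends H \<in> card ` {X. is_fvs ends H X}" unfolding fvs_def using fin by (intro Min_in) auto
  thus ?thesis by auto
qed

lemma fvs_sub:
  assumes "subgraph ends H K" "is_fvs ends K X"
  shows "is_fvs ends H (X \<inter> fst H)"
  unfolding is_fvs_def acyclic_mg_def
proof (intro conjI notI; (elim exE)?)
  fix vs es assume c: "is_cycle ends (remove ends H (X \<inter> fst H)) vs es"
  have "is_cycle ends (remove ends K X) vs es"
  proof (rule cycle_transfer[OF c])
    show "set vs \<subseteq> fst (remove ends K X)" using cycle_in[OF c] assms(1) by (auto simp: subgraph_def)
    show "set es \<subseteq> snd (remove ends K X)" using cycle_in[OF c] assms(1) by (auto simp: subgraph_def)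
  qed
  thus False using assms(2) by (auto simp: is_fvs_def acyclic_mg_def)
qed auto

lemma fvs_mono:
  assumes "subgraph ends H K" "finite (fst K)"
  shows "fvs ends H \<le> fvs ends K"
proof -
  obtain X where X: "is_fvs ends K X" "card X = fvs ends K" using fvs_ex[OF assms(2)] by blast
  have fH: "finite (fst H)" using assms by (auto simp: subgraph_def intro: finite_subset)
  have "fvs ends H \<le> card (X \<inter> fst H)" by (rule fvs_le[OF fH fvs_sub[OF assms(1) X(1)]])
  also have "\<dots> \<le> card X" using X(1) assms(2) by (intro card_mono) (auto simp: is_fvs_def intro: finite_subset)
  finally show ?thesis using X by simp
qed

lemma cert_antler:
  assumes "is_certificate ends K C z H" "finite (fst K)"
  shows "card C \<le> fvs ends K"
proof -
  have "subgraph ends H K" "card C = fvs ends H" using assms(1) by (auto simp: is_certificate_def)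
  thus ?thesis using fvs_mono[of ends H K] assms(2) by simp
qed

lemma comp_of: "u \<in> fst H \<Longrightarrow> {v \<in> fst H. (u,v) \<in> (adj_rel ends H)\<^sup>*} \<in> components ends H"
  unfolding components_def by auto

lemma comp_subset: "T \<in> components ends H \<Longrightarrow> T \<subseteq> fst H"
  unfolding components_def by auto

lemma adj_sym: "sym (adj_rel ends H)"
  unfolding adj_rel_def sym_def by (auto simp: insert_commute)

lemma comp_adj_closed:
  assumes "\<forall>e\<in>snd H. ends e \<subseteq> fst H" "T \<in> components ends H" "u \<in> T" "(u,w) \<in> adj_rel ends H"
  shows "w \<in> T"
proof -
  obtain c where T: "T = {v \<in> fst H. (c,v) \<in> (adj_rel ends H)\<^sup>*}" using assms(2) unfolding components_def by auto
  have "(c,w) \<in> (adj_rel ends H)\<^sup>*" using assms(3,4) T by auto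
  moreover have "w \<in> fst H" using assms(1,4) unfolding adj_rel_def by auto
  ultimately show ?thesis using T by auto
qed

lemma comp_sub_closed:
  assumes "T \<in> components ends H" "x \<in> T" "x \<in> X"
    "\<And>u w. (u,w) \<in> adj_rel ends H \<Longrightarrow> u \<in> X \<Longrightarrow> w \<in> X"
  shows "T \<subseteq> X"
proof
  fix v assume v: "v \<in> T"
  obtain c where T: "T = {v \<in> fst H. (c,v) \<in> (adj_rel ends H)\<^sup>*}" using assms(1) unfolding components_def by auto
  have "(c,x) \<in> (adj_rel ends H)\<^sup>*" using T assms(2) by auto
  hence "(x,c) \<in> (adj_rel ends H)\<^sup>*" using sym_rtrancl[OF adj_sym[of ends H]] by (simp add: sym_def)
  moreover have "(c,v) \<in> (adj_rel ends H)\<^sup>*" using T v by auto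
  ultimately have "(x,v) \<in> (adj_rel ends H)\<^sup>*" by auto
  thus "v \<in> X"
    by (induction rule: rtrancl_induct) (use assms(3,4) in auto)
qed

lemma eb_unique:
  assumes "edges_between ends H X Y \<le> 1" "finite (snd H)"
    "e1 \<in> snd H" "x1 \<in> X" "y1 \<in> Y" "ends e1 = {x1,y1}"
    "e2 \<in> snd H" "x2 \<in> X" "y2 \<in> Y" "ends e2 = {x2,y2}"
  shows "e1 = e2"
proof (rule ccontr)
  assume ne: "e1 \<noteq> e2"
  have "{e1,e2} \<subseteq> {e \<in> snd H. \<exists>x\<in>X. \<exists>y\<in>Y. ends e = {x, y}}" using assms by auto
  hence "card {e1,e2} \<le> edges_between ends H X Y" unfolding edges_between_def
    using assms(2) by (intro card_mono) auto
  thus False using ne assms(1) by auto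
qed

lemma crossing1:
  assumes "i0 < length vs" "P (vs!i0)" "j0 < length vs" "\<not> P (vs!j0)"
  shows "\<exists>i < length vs. P (vs!i) \<and> \<not> P (vs!((i+1) mod length vs))"
proof (rule ccontr)
  let ?k = "length vs"
  assume "\<not> ?thesis"
  hence H: "\<And>i. i < ?k \<Longrightarrow> P (vs!i) \<Longrightarrow> P (vs!((i+1) mod ?k))" by blast
  have "P (vs!((i0+m) mod ?k))" for m
  proof (induction m)
    case 0 then show ?case using assms by simp
  next
    case (Suc m)
    have "(i0 + Suc m) mod ?k = ((i0+m) mod ?k + 1) mod ?k" by (simp add: mod_Suc_eq)
    moreover have "(i0+m) mod ?k < ?k" using assms(1) by (intro mod_less_divisor) linarith
    ultimately show ?case using H Suc by metis
  qed
  moreover have "i0 + (j0 + ?k - i0) = j0 + ?k" using assms(1) by linarith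
  ultimately have "P (vs!((j0 + ?k) mod ?k))" by metis
  thus False using assms(3,4) by simp
qed


lemma adj_rel_union:
  "adj_rel ends (V1 \<union> V2, E1 \<union> E2) = adj_rel ends (V1, E1) \<union> adj_rel ends (V2, E2)"
  unfolding adj_rel_def by auto

lemma adj_rel_sub: "\<forall>e\<in>snd H. ends e \<subseteq> fst H \<Longrightarrow> adj_rel ends H \<subseteq> fst H \<times> fst H"
  unfolding adj_rel_def by auto

lemma rtrancl_stay:
  assumes "(u,v) \<in> (r1 \<union> r2)\<^sup>*" "u \<in> V1" "r1 \<subseteq> V1 \<times> V1" "r2 \<subseteq> V2 \<times> V2" "V1 \<inter> V2 = {}"
  shows "(u,v) \<in> r1\<^sup>* \<and> v \<in> V1"
  using assms(1)
proof (induction rule: rtrancl_induct)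
  case base then show ?case using assms by auto
next
  case (step y w)
  then have "(y,w) \<in> r1" using assms by blast
  then show ?case using step assms by auto
qed

lemma comp_union:
  assumes "\<forall>e\<in>E1. ends e \<subseteq> V1" "\<forall>e\<in>E2. ends e \<subseteq> V2" "V1 \<inter> V2 = {}"
  shows "components ends (V1 \<union> V2, E1 \<union> E2) = components ends (V1, E1) \<union> components ends (V2, E2)"
proof -
  let ?r = "adj_rel ends (V1 \<union> V2, E1 \<union> E2)"
  let ?r1 = "adj_rel ends (V1, E1)"
  let ?r2 = "adj_rel ends (V2, E2)"
  have r1: "?r1 \<subseteq> V1 \<times> V1" using adj_rel_sub[of "(V1,E1)"] assms by auto
  have r2: "?r2 \<subseteq> V2 \<times> V2" using adj_rel_sub[of "(V2,E2)"] assms by auto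
  have r: "?r = ?r1 \<union> ?r2" by (rule adj_rel_union)
  have e1: "{v \<in> V1 \<union> V2. (u,v) \<in> ?r\<^sup>*} = {v \<in> V1. (u,v) \<in> ?r1\<^sup>*}" if "u \<in> V1" for u
  proof -
    have "(u,v) \<in> ?r\<^sup>* \<Longrightarrow> (u,v) \<in> ?r1\<^sup>* \<and> v \<in> V1" for v
      using rtrancl_stay[of u v ?r1 ?r2 V1 V2] r r1 r2 assms(3) that by auto
    moreover have "(u,v) \<in> ?r1\<^sup>* \<Longrightarrow> (u,v) \<in> ?r\<^sup>*" for v
      using r rtrancl_mono[of ?r1 ?r] by auto
    ultimately show ?thesis by auto
  qed
  have e2: "{v \<in> V1 \<union> V2. (u,v) \<in> ?r\<^sup>*} = {v \<in> V2. (u,v) \<in> ?r2\<^sup>*}" if "u \<in> V2" for u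
  proof -
    have "(u,v) \<in> ?r\<^sup>* \<Longrightarrow> (u,v) \<in> ?r2\<^sup>* \<and> v \<in> V2" for v
      using rtrancl_stay[of u v ?r2 ?r1 V2 V1] r r1 r2 assms(3) that by (auto simp: Un_commute Int_commute)
    moreover have "(u,v) \<in> ?r2\<^sup>* \<Longrightarrow> (u,v) \<in> ?r\<^sup>*" for v
      using r rtrancl_mono[of ?r2 ?r] by auto
    ultimately show ?thesis by auto
  qed
  show ?thesis unfolding components_def fst_conv image_Un
    using e1 e2 by (auto intro!: image_cong)
qed

lemma cycle_part:
  assumes c: "is_cycle ends (V1 \<union> V2, E1 \<union> E2) vs es"
    and a: "\<forall>e\<in>E1. ends e \<subseteq> V1" "\<forall>e\<in>E2. ends e \<subseteq> V2" "V1 \<inter> V2 = {}"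
    and v0: "vs ! 0 \<in> V1"
  shows "set vs \<subseteq> V1 \<and> set es \<subseteq> E1"
proof -
  let ?k = "length vs"
  have k: "?k \<ge> 1" "length es = ?k" using c by (auto simp: is_cycle_def)
  have ends: "\<And>i. i < ?k \<Longrightarrow> ends (es ! i) = {vs ! i, vs ! ((i + 1) mod ?k)}"
    using c by (auto simp: is_cycle_def)
  have esin: "es ! i \<in> E1 \<union> E2" if "i < ?k" for i
  proof -
    have "es ! i \<in> set es" using k that by simp
    thus ?thesis using cycle_in[OF c] by auto
  qed
  have step: "es ! i \<in> E1 \<and> vs ! ((i + 1) mod ?k) \<in> V1" if "i < ?k" "vs ! i \<in> V1" for i
  proof -
    have "es ! i \<notin> E2" using a ends[OF that(1)] that(2) by blast
    hence "es ! i \<in> E1" using esin that(1) by auto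
    thus ?thesis using a ends[OF that(1)] by auto
  qed
  have vsall: "i < ?k \<Longrightarrow> vs ! i \<in> V1" for i
  proof (induction i)
    case 0 then show ?case using v0 by simp
  next
    case (Suc i)
    then have "vs ! ((i + 1) mod ?k) \<in> V1" using step[of i] by simp
    moreover have "(i + 1) mod ?k = Suc i" using Suc.prems by simp
    ultimately show ?case by simp
  qed
  have "set vs \<subseteq> V1" using vsall by (auto simp: in_set_conv_nth)
  moreover have "set es \<subseteq> E1" using vsall step k by (auto simp: in_set_conv_nth)
  ultimately show ?thesis by simp
qed

lemma cert_union:
  assumes fin: "finite V1" "finite V2"
    and cl: "\<forall>e\<in>E1. ends e \<subseteq> V1" "\<forall>e\<in>E2. ends e \<subseteq> V2"
    and ne: "\<forall>e\<in>E1 \<union> E2. ends e \<noteq> {}"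
    and disj: "V1 \<inter> V2 = {}"
    and f1: "is_fvs ends (V1,E1) C1" "card C1 = fvs ends (V1,E1)"
      "\<forall>K\<in>components ends (V1,E1). fvs ends (induced ends (V1,E1) K) = card (C1 \<inter> K) \<and> card (C1 \<inter> K) \<le> z"
    and f2: "is_fvs ends (V2,E2) C2" "card C2 = fvs ends (V2,E2)"
      "\<forall>K\<in>components ends (V2,E2). fvs ends (induced ends (V2,E2) K) = card (C2 \<inter> K) \<and> card (C2 \<inter> K) \<le> z"
  shows "is_fvs ends (V1 \<union> V2, E1 \<union> E2) (C1 \<union> C2) \<and> card (C1 \<union> C2) = fvs ends (V1 \<union> V2, E1 \<union> E2) \<and>
    (\<forall>K\<in>components ends (V1 \<union> V2, E1 \<union> E2).
        fvs ends (induced ends (V1 \<union> V2, E1 \<union> E2) K) = card ((C1 \<union> C2) \<inter> K) \<and> card ((C1 \<union> C2) \<inter> K) \<le> z)"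
proof -
  let ?H = "(V1 \<union> V2, E1 \<union> E2)"
  have C1s: "C1 \<subseteq> V1" and C2s: "C2 \<subseteq> V2" using f1 f2 by (auto simp: is_fvs_def)
  have finH: "finite (fst ?H)" using fin by simp
  have fvsC: "is_fvs ends ?H (C1 \<union> C2)"
    unfolding is_fvs_def acyclic_mg_def
  proof (intro conjI notI; (elim exE)?)
    show "C1 \<union> C2 \<subseteq> fst ?H" using C1s C2s by auto
  next
    fix vs es assume c: "is_cycle ends (remove ends ?H (C1 \<union> C2)) vs es"
    have cH: "is_cycle ends ?H vs es" using cycle_in[OF c] by (intro cycle_transfer[OF c]) auto
    have sv: "set vs \<subseteq> V1 \<union> V2 - (C1 \<union> C2)" using cycle_in[OF c] by auto
    have v0: "vs ! 0 \<in> set vs" using c by (intro nth_mem) (auto simp: is_cycle_def)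
    show False
    proof (cases "vs ! 0 \<in> V1")
      case True
      from cycle_part[OF cH cl disj True] have p: "set vs \<subseteq> V1 \<and> set es \<subseteq> E1" .
      have "is_cycle ends (remove ends (V1,E1) C1) vs es"
      proof (rule cycle_transfer[OF c])
        show "set vs \<subseteq> fst (remove ends (V1, E1) C1)" using p sv by auto
        show "set es \<subseteq> snd (remove ends (V1, E1) C1)" using p sv cycle_edge_ends[OF c] by auto
      qed
      thus False using f1(1) by (auto simp: is_fvs_def acyclic_mg_def)
    next
      case False
      hence T: "vs ! 0 \<in> V2" using v0 sv by auto
      have cH': "is_cycle ends (V2 \<union> V1, E2 \<union> E1) vs es" using cH by (simp add: Un_commute)
      from cycle_part[OF cH' cl(2) cl(1) _ T] disj have p: "set vs \<subseteq> V2 \<and> set es \<subseteq> E2" by auto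
      have "is_cycle ends (remove ends (V2,E2) C2) vs es"
      proof (rule cycle_transfer[OF c])
        show "set vs \<subseteq> fst (remove ends (V2, E2) C2)" using p sv by auto
        show "set es \<subseteq> snd (remove ends (V2, E2) C2)" using p sv cycle_edge_ends[OF c] by auto
      qed
      thus False using f2(1) by (auto simp: is_fvs_def acyclic_mg_def)
    qed
  qed
  have cardC: "card (C1 \<union> C2) = card C1 + card C2"
    using C1s C2s disj fin by (intro card_Un_disjoint) (auto intro: finite_subset)
  have fvsH: "card (C1 \<union> C2) = fvs ends ?H"
  proof (rule antisym)
    show "fvs ends ?H \<le> card (C1 \<union> C2)" by (rule fvs_le[OF finH fvsC])
    obtain X where X: "is_fvs ends ?H X" "card X = fvs ends ?H" using fvs_ex[OF finH] by blast
    have sg1: "subgraph ends (V1,E1) ?H" using cl by (auto simp: subgraph_def)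
    have sg2: "subgraph ends (V2,E2) ?H" using cl by (auto simp: subgraph_def)
    have "card C1 \<le> card (X \<inter> V1)" using fvs_le[OF _ fvs_sub[OF sg1 X(1)]] f1(2) fin by simp
    moreover have "card C2 \<le> card (X \<inter> V2)" using fvs_le[OF _ fvs_sub[OF sg2 X(1)]] f2(2) fin by simp
    moreover have "card (X \<inter> V1) + card (X \<inter> V2) = card ((X \<inter> V1) \<union> (X \<inter> V2))"
      using fin disj by (intro card_Un_disjoint[symmetric]) auto
    moreover have "card ((X \<inter> V1) \<union> (X \<inter> V2)) \<le> card X"
      using X(1) fin by (intro card_mono) (auto simp: is_fvs_def intro: finite_subset)
    ultimately show "card (C1 \<union> C2) \<le> fvs ends ?H" using cardC X(2) by linarith
  qed
  have comps: "components ends ?H = components ends (V1,E1) \<union> components ends (V2,E2)"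
    by (rule comp_union[OF cl disj])
  have "fvs ends (induced ends ?H K) = card ((C1 \<union> C2) \<inter> K) \<and> card ((C1 \<union> C2) \<inter> K) \<le> z"
    if K: "K \<in> components ends ?H" for K
  proof (cases "K \<in> components ends (V1,E1)")
    case True
    have Ks: "K \<subseteq> V1" using comp_subset[OF True] by simp
    have "induced ends ?H K = induced ends (V1,E1) K"
    proof -
      have "fst (induced ends ?H K) = fst (induced ends (V1,E1) K)" using Ks by auto
      moreover have "snd (induced ends ?H K) = snd (induced ends (V1,E1) K)"
        using Ks cl ne disj by auto (blast+)?
      ultimately show ?thesis by (simp add: prod_eq_iff)
    qed
    moreover have "(C1 \<union> C2) \<inter> K = C1 \<inter> K" using Ks C2s disj by auto
    ultimately show ?thesis using f1(3) True by simp
  next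
    case False
    hence K2: "K \<in> components ends (V2,E2)" using K comps by auto
    have Ks: "K \<subseteq> V2" using comp_subset[OF K2] by simp
    have "induced ends ?H K = induced ends (V2,E2) K"
    proof -
      have "fst (induced ends ?H K) = fst (induced ends (V2,E2) K)" using Ks by auto
      moreover have "snd (induced ends ?H K) = snd (induced ends (V2,E2) K)"
        using Ks cl ne disj by auto (blast+)?
      ultimately show ?thesis by (simp add: prod_eq_iff)
    qed
    moreover have "(C1 \<union> C2) \<inter> K = C2 \<inter> K" using Ks C1s disj by auto
    ultimately show ?thesis using f2(3) K2 by simp
  qed
  thus ?thesis using fvsC fvsH by blast
qed


lemma rtrancl_range: "(u,a) \<in> r\<^sup>* \<Longrightarrow> r \<subseteq> V \<times> V \<Longrightarrow> u \<in> V \<Longrightarrow> a \<in> V"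
  by (erule rtranclE) auto

lemma combine_fvc:
  assumes wf: "wf_mgraph ends G"
    and a1: "is_fvc ends G C1 F1"
    and a2: "is_fvc ends (remove ends G (C1 \<union> F1)) C2 F2"
  shows "is_fvc ends G (C1 \<union> C2) (F1 \<union> F2)"
proof -
  define G' where "G' = remove ends G (C1 \<union> F1)"
  define V where "V = fst G"
  define E where "E = snd G"
  define r1 where "r1 = adj_rel ends (induced ends G F1)"
  define r2 where "r2 = adj_rel ends (induced ends G' F2)"
  have es: "\<And>e. e \<in> E \<Longrightarrow> ends e \<subseteq> V" and finE: "finite E"
    using wf unfolding wf_mgraph_def V_def E_def by auto
  have fG': "fst G' = V - (C1 \<union> F1)" and sG': "snd G' = {e \<in> E. ends e \<subseteq> V - (C1 \<union> F1)}"
    unfolding G'_def V_def E_def by auto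
  have finE': "finite (snd G')" using finE sG' by auto
  have C1V: "C1 \<subseteq> V" and F1V: "F1 \<subseteq> V" and C1F1: "C1 \<inter> F1 = {}"
    and acyc1: "acyclic_mg ends (induced ends G F1)"
    and eb1: "\<forall>T\<in>components ends (induced ends G F1). edges_between ends G T (V - (C1 \<union> F1)) \<le> 1"
    using a1 unfolding is_fvc_def V_def by auto
  have C2V: "C2 \<subseteq> V - (C1 \<union> F1)" and F2V: "F2 \<subseteq> V - (C1 \<union> F1)" and C2F2: "C2 \<inter> F2 = {}"
    and acyc2: "acyclic_mg ends (induced ends G' F2)"
    and eb2: "\<forall>S\<in>components ends (induced ends G' F2). edges_between ends G' S (V - (C1 \<union> F1) - (C2 \<union> F2)) \<le> 1"
    using a2 fG' unfolding is_fvc_def G'_def[symmetric] by auto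
  have uni1: "e = e'" if T: "T \<in> components ends (induced ends G F1)" and "e \<in> E" "e' \<in> E"
    "t \<in> T" "t' \<in> T" "w \<in> V - (C1 \<union> F1)" "w' \<in> V - (C1 \<union> F1)" "ends e = {t,w}" "ends e' = {t',w'}"
    for T e e' t t' w w'
    using eb_unique[of ends G T "V - (C1 \<union> F1)" e t w e' t' w'] eb1 T that finE
    unfolding E_def by auto
  have cl1: "w \<in> T" if T: "T \<in> components ends (induced ends G F1)" and "u \<in> T" "e \<in> E" "ends e = {u,w}" "w \<in> F1"
    for T u e w
  proof (rule comp_adj_closed[OF _ T \<open>u \<in> T\<close>])
    show "\<forall>e\<in>snd (induced ends G F1). ends e \<subseteq> fst (induced ends G F1)" using es unfolding E_def V_def by auto
    have "u \<in> F1" using comp_subset[OF T] that by auto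
    thus "(u, w) \<in> adj_rel ends (induced ends G F1)" unfolding adj_rel_def using that unfolding E_def by auto
  qed
  have cl2: "w \<in> S" if S: "S \<in> components ends (induced ends G' F2)" and "u \<in> S" "e \<in> E" "ends e = {u,w}" "w \<in> F2"
    for S u e w
  proof (rule comp_adj_closed[OF _ S \<open>u \<in> S\<close>])
    show "\<forall>e\<in>snd (induced ends G' F2). ends e \<subseteq> fst (induced ends G' F2)" using sG' fG' by auto
    have "u \<in> F2" using comp_subset[OF S] that by auto
    hence "e \<in> snd G'" "ends e \<subseteq> F2" using sG' that F2V by auto
    thus "(u, w) \<in> adj_rel ends (induced ends G' F2)" unfolding adj_rel_def using that by auto
  qed
  have comp1: "{v \<in> V \<inter> F1. (u,v) \<in> r1\<^sup>*} \<in> components ends (induced ends G F1)" if "u \<in> V \<inter> F1" for u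
    using comp_of[of u "induced ends G F1" ends] that unfolding r1_def V_def by auto
  have comp2: "{v \<in> (V - (C1 \<union> F1)) \<inter> F2. (u,v) \<in> r2\<^sup>*} \<in> components ends (induced ends G' F2)"
    if "u \<in> F2" for u
    using comp_of[of u "induced ends G' F2" ends] that F2V fG' unfolding r2_def by auto
  have r1s: "r1 \<subseteq> (V \<inter> F1) \<times> (V \<inter> F1)"
    using adj_rel_sub[of "induced ends G F1" ends] es unfolding r1_def V_def E_def by auto
  define F where "F = F1 \<union> F2"
  have F12: "F1 \<inter> F2 = {}" using F2V by auto
  have acyc: "acyclic_mg ends (induced ends G F)"
    unfolding acyclic_mg_def
  proof (intro notI; elim exE)
    fix vs es' assume c: "is_cycle ends (induced ends G F) vs es'"
    let ?k = "length vs"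
    have sv: "set vs \<subseteq> V \<inter> F" and se: "set es' \<subseteq> {e \<in> E. ends e \<subseteq> F}"
      using cycle_in[OF c] unfolding V_def E_def by auto
    have k: "?k \<ge> 1" "length es' = ?k" "distinct es'" and
      ends: "\<And>i. i < ?k \<Longrightarrow> ends (es' ! i) = {vs ! i, vs ! ((i + 1) mod ?k)}"
      using c by (auto simp: is_cycle_def)
    show False
    proof (cases "set vs \<subseteq> F2")
      case True
      have "is_cycle ends (induced ends G' F2) vs es'"
      proof (rule cycle_transfer[OF c])
        show "set vs \<subseteq> fst (induced ends G' F2)" using True F2V fG' by auto
        show "set es' \<subseteq> snd (induced ends G' F2)"
          using cycle_edge_ends[OF c] True F2V se sG' by fastforce
      qed
      thus False using acyc2 by (auto simp: acyclic_mg_def)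
    next
      case False
      then obtain v where v: "v \<in> set vs" "v \<notin> F2" by auto
      hence vF1: "v \<in> V \<inter> F1" using sv unfolding F_def by auto
      define T where "T = {x \<in> V \<inter> F1. (v,x) \<in> r1\<^sup>*}"
      have T: "T \<in> components ends (induced ends G F1)" using comp1[OF vF1] T_def by simp
      have vT: "v \<in> T" using vF1 T_def by auto
      have TF1: "T \<subseteq> V \<inter> F1" using T_def by auto
      show False
      proof (cases "set vs \<subseteq> T")
        case True
        have "is_cycle ends (induced ends G F1) vs es'"
        proof (rule cycle_transfer[OF c])
          show "set vs \<subseteq> fst (induced ends G F1)" using True TF1 unfolding V_def by auto
          show "set es' \<subseteq> snd (induced ends G F1)"
            using cycle_edge_ends[OF c] True TF1 se unfolding E_def by fastforce
        qed
        thus False using acyc1 by (auto simp: acyclic_mg_def)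
      next
        case False
        then obtain b where b: "b \<in> set vs" "b \<notin> T" by auto
        obtain i0 where i0: "i0 < ?k" "vs ! i0 = v" using v(1) by (auto simp: in_set_conv_nth)
        obtain j0 where j0: "j0 < ?k" "vs ! j0 = b" using b(1) by (auto simp: in_set_conv_nth)
        obtain i where i: "i < ?k" "vs ! i \<in> T" "vs ! ((i+1) mod ?k) \<notin> T"
          using crossing1[of i0 vs "\<lambda>x. x \<in> T" j0] i0 j0 vT b by auto
        obtain j where j: "j < ?k" "vs ! j \<notin> T" "vs ! ((j+1) mod ?k) \<in> T"
          using crossing1[of j0 vs "\<lambda>x. x \<notin> T" i0] i0 j0 vT b by auto
        have out: "x \<in> V - (C1 \<union> F1)" if "x \<in> set vs" "x \<notin> T" "y \<in> T" "e \<in> E" "ends e = {y, x}" for x y e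
        proof -
          have "x \<in> V \<inter> F" using that sv by auto
          moreover have "x \<notin> F1" using cl1[OF T that(3,4,5)] that(2) by auto
          ultimately show ?thesis using F2V unfolding F_def by auto
        qed
        have mi: "(i+1) mod ?k < ?k" "(j+1) mod ?k < ?k" using k(1) by (intro mod_less_divisor; linarith)+
        have eiE: "es' ! i \<in> E" "es' ! j \<in> E" proof -
          have "es' ! i \<in> set es'" "es' ! j \<in> set es'" using k(2) i(1) j(1) by simp_all
          thus "es' ! i \<in> E" "es' ! j \<in> E" using se by auto
        qed
        have "es' ! i = es' ! j"
        proof (rule uni1[OF T eiE(1) eiE(2) i(2) j(3)])
          show "ends (es' ! i) = {vs ! i, vs ! ((i + 1) mod ?k)}" using ends i(1) .
          show "ends (es' ! j) = {vs ! ((j + 1) mod ?k), vs ! j}" using ends j(1) by auto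
          show "vs ! ((i + 1) mod ?k) \<in> V - (C1 \<union> F1)"
            using out[of "vs ! ((i + 1) mod ?k)" "vs ! i" "es' ! i"] i mi eiE ends by auto
          show "vs ! j \<in> V - (C1 \<union> F1)"
            using out[of "vs ! j" "vs ! ((j + 1) mod ?k)" "es' ! j"] j mi eiE ends by (auto simp: insert_commute)
        qed
        moreover have "i \<noteq> j" using i j by auto
        ultimately show False using k i(1) j(1) nth_eq_iff_index_eq by metis
      qed
    qed
  qed
  define W where "W = V - ((C1 \<union> C2) \<union> F)"
  have cnt: "edges_between ends G T W \<le> 1" if T: "T \<in> components ends (induced ends G F)" for T
  proof -
    have TF: "T \<subseteq> V \<inter> F" using comp_subset[OF T] unfolding V_def by auto
    have caseA: "e1 = e2" if "e1 \<in> E" "x1 \<in> T" "y1 \<in> W" "ends e1 = {x1,y1}"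
      "e2 \<in> E" "x2 \<in> T" "y2 \<in> W" "ends e2 = {x2,y2}" "x1 \<in> F1" for e1 e2 x1 x2 y1 y2
    proof -
      have x1: "x1 \<in> V \<inter> F1" using that TF by auto
      define T' where "T' = {v \<in> V \<inter> F1. (x1,v) \<in> r1\<^sup>*}"
      have T': "T' \<in> components ends (induced ends G F1)" using comp1[OF x1] T'_def by simp
      have x1T': "x1 \<in> T'" using x1 T'_def by auto
      have yW: "y1 \<in> V - (C1 \<union> F1)" "y2 \<in> V - (C1 \<union> F1)" "y1 \<notin> F" using that unfolding W_def F_def by auto
      have "T \<subseteq> T'"
      proof (rule comp_sub_closed[OF T that(2) x1T'])
        fix u w assume uw: "(u, w) \<in> adj_rel ends (induced ends G F)" "u \<in> T'"
        then obtain e where e: "e \<in> E" "ends e = {u,w}" "ends e \<subseteq> F"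
          unfolding adj_rel_def E_def by auto
        show "w \<in> T'"
        proof (cases "w \<in> F1")
          case True thus ?thesis using cl1[OF T' uw(2) e(1,2)] by simp
        next
          case False
          hence "w \<in> V - (C1 \<union> F1)" using e es F2V unfolding F_def by auto
          hence "e = e1" using uni1[OF T' e(1) that(1) uw(2) x1T' _ yW(1) e(2) that(4)] by simp
          hence False using e that(4) yW(3) by auto
          thus ?thesis ..
        qed
      qed
      thus ?thesis using uni1[OF T' that(1) that(5) x1T' _ yW(1) yW(2) that(4) that(8)] that(6) by auto
    qed
    have "e1 = e2" if h12: "e1 \<in> {e \<in> snd G. \<exists>x\<in>T. \<exists>y\<in>W. ends e = {x, y}}"
      "e2 \<in> {e \<in> snd G. \<exists>x\<in>T. \<exists>y\<in>W. ends e = {x, y}}" for e1 e2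
    proof -
      obtain x1 y1 where 1: "e1 \<in> E" "x1 \<in> T" "y1 \<in> W" "ends e1 = {x1,y1}" using h12(1) unfolding E_def by auto
      obtain x2 y2 where 2: "e2 \<in> E" "x2 \<in> T" "y2 \<in> W" "ends e2 = {x2,y2}" using h12(2) unfolding E_def by auto
      show ?thesis
      proof (cases "x1 \<in> F1 \<or> x2 \<in> F1")
        case True
        thus ?thesis using caseA[OF 1 2] caseA[OF 2 1] by auto
      next
        case False
        hence x12: "x1 \<in> F2" "x2 \<in> F2" using 1 2 TF unfolding F_def by auto
        define S where "S = {v \<in> (V - (C1 \<union> F1)) \<inter> F2. (x1,v) \<in> r2\<^sup>*}"
        have S: "S \<in> components ends (induced ends G' F2)" using comp2[OF x12(1)] S_def by simp
        have x1S: "x1 \<in> S" using x12 F2V S_def by auto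
        have SF2: "S \<subseteq> (V - (C1 \<union> F1)) \<inter> F2" using S_def by auto
        define X where "X = S \<union> {u. u \<in> V \<inter> F1 \<and> (\<exists>a s e. (u,a) \<in> r1\<^sup>* \<and> s \<in> S \<and> e \<in> E \<and> ends e = {a,s})}"
        have "T \<subseteq> X"
        proof (rule comp_sub_closed[OF T 1(2)])
          show "x1 \<in> X" using x1S X_def by auto
          fix u w assume uw: "(u, w) \<in> adj_rel ends (induced ends G F)" "u \<in> X"
          then obtain e where e: "e \<in> E" "ends e = {u,w}" "ends e \<subseteq> F"
            unfolding adj_rel_def E_def by auto
          have wV: "w \<in> V" "w \<in> F" using es[OF e(1)] e by auto
          show "w \<in> X"
          proof (cases "u \<in> S")
            case True
            show ?thesis
            proof (cases "w \<in> F2")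
              case True
              thus ?thesis using cl2[OF S \<open>u \<in> S\<close> e(1,2)] X_def by auto
            next
              case False
              hence "w \<in> V \<inter> F1" using wV unfolding F_def by auto
              moreover have "ends e = {w,u}" using e(2) by auto
              ultimately show ?thesis unfolding X_def using \<open>u \<in> S\<close> e(1) by blast
            qed
          next
            case False
            then obtain a s e0 where u: "u \<in> V \<inter> F1" "(u,a) \<in> r1\<^sup>*" "s \<in> S" "e0 \<in> E" "ends e0 = {a,s}"
              using uw(2) unfolding X_def by auto
            show ?thesis
            proof (cases "w \<in> F1")
              case True
              have "e \<in> snd (induced ends G F1)" using e True u(1) unfolding E_def by auto
              hence "(w,u) \<in> r1" unfolding r1_def adj_rel_def using e(2) by (auto simp: insert_commute)
              hence "(w,a) \<in> r1\<^sup>*" using u(2) by auto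
              thus ?thesis unfolding X_def using True wV u(3-5) by blast
            next
              case False
              hence wF2: "w \<in> F2" using wV unfolding F_def by auto
              show ?thesis
              proof (cases "w \<in> S")
                case True thus ?thesis unfolding X_def by auto
              next
                case False
                define T' where "T' = {v \<in> V \<inter> F1. (u,v) \<in> r1\<^sup>*}"
                have T': "T' \<in> components ends (induced ends G F1)" using comp1[OF u(1)] T'_def by simp
                have uT': "u \<in> T'" using u(1) T'_def by auto
                have "a \<in> V \<inter> F1" using rtrancl_range[OF u(2) r1s u(1)] .
                hence aT': "a \<in> T'" using u(2) T'_def by auto
                have "e0 = e" using uni1[OF T' u(4) e(1) aT' uT' _ _ u(5) e(2)] SF2 u(3) wF2 F2V by auto
                hence "{a,s} = {u,w}" using u(5) e(2) by simp
                moreover have "s \<noteq> u" using u(1,3) SF2 by auto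
                ultimately have "s = w" by auto
                thus ?thesis using False u(3) by simp
              qed
            qed
          qed
        qed
        hence "x2 \<in> S" using 2(2) x12(2) F12 unfolding X_def by auto
        have yV: "y1 \<in> V - (C1 \<union> F1) - (C2 \<union> F2)" "y2 \<in> V - (C1 \<union> F1) - (C2 \<union> F2)"
          using 1 2 unfolding W_def F_def by auto
        have "e1 \<in> snd G'" "e2 \<in> snd G'" using 1 2 sG' x12 F2V yV by auto
        thus ?thesis using eb_unique[of ends G' S _ e1 x1 y1 e2 x2 y2] eb2 S finE' x1S \<open>x2 \<in> S\<close> yV 1(4) 2(4)
          by auto
      qed
    qed
    moreover have "finite {e \<in> snd G. \<exists>x\<in>T. \<exists>y\<in>W. ends e = {x, y}}" using finE unfolding E_def by auto
    ultimately show ?thesis unfolding edges_between_def using card_le_Suc0_iff_eq by (metis (no_types, lifting) One_nat_def)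
  qed
  show ?thesis unfolding is_fvc_def
    using C1V C2V F1V F2V C1F1 C2F2 acyc cnt unfolding F_def W_def V_def by auto
qed


lemma combine:
  assumes wf: "wf_mgraph ends G"
    and A1: "is_z_antler ends z G C1 F1"
    and A2: "is_z_antler ends z (remove ends G (C1 \<union> F1)) C2 F2"
  shows "is_z_antler ends z G (C1 \<union> C2) (F1 \<union> F2)"
proof -
  let ?G' = "remove ends G (C1 \<union> F1)"
  have fvc: "is_fvc ends G (C1 \<union> C2) (F1 \<union> F2)"
    using combine_fvc[OF wf] A1 A2 by (auto simp: is_z_antler_def is_antler_def)
  obtain H1 where H1: "is_certificate ends (induced ends G (C1 \<union> F1)) C1 z H1"
    using A1 by (auto simp: is_z_antler_def)
  obtain H2 where H2: "is_certificate ends (induced ends ?G' (C2 \<union> F2)) C2 z H2"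
    using A2 by (auto simp: is_z_antler_def)
  obtain V1 E1 where h1: "H1 = (V1, E1)" by (cases H1)
  obtain V2 E2 where h2: "H2 = (V2, E2)" by (cases H2)
  have es: "\<forall>e\<in>snd G. ends e \<subseteq> fst G \<and> ends e \<noteq> {}" and finV: "finite (fst G)"
    using wf unfolding wf_mgraph_def by fastforce+
  have s1: "V1 \<subseteq> fst G \<inter> (C1 \<union> F1)" "E1 \<subseteq> {e \<in> snd G. ends e \<subseteq> C1 \<union> F1}" "\<forall>e\<in>E1. ends e \<subseteq> V1"
    using H1 h1 by (auto simp: is_certificate_def subgraph_def)
  have s2: "V2 \<subseteq> fst G - (C1 \<union> F1)" "V2 \<subseteq> C2 \<union> F2" "E2 \<subseteq> {e \<in> snd G. ends e \<subseteq> C2 \<union> F2}" "\<forall>e\<in>E2. ends e \<subseteq> V2"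
    using H2 h2 by (auto simp: is_certificate_def subgraph_def)
  have U: "is_fvs ends (V1 \<union> V2, E1 \<union> E2) (C1 \<union> C2) \<and> card (C1 \<union> C2) = fvs ends (V1 \<union> V2, E1 \<union> E2) \<and>
    (\<forall>K\<in>components ends (V1 \<union> V2, E1 \<union> E2).
        fvs ends (induced ends (V1 \<union> V2, E1 \<union> E2) K) = card ((C1 \<union> C2) \<inter> K) \<and> card ((C1 \<union> C2) \<inter> K) \<le> z)"
  proof (rule cert_union)
    show "finite V1" "finite V2" using s1 s2 finV by (auto intro: finite_subset)
    show "\<forall>e\<in>E1. ends e \<subseteq> V1" "\<forall>e\<in>E2. ends e \<subseteq> V2" using s1 s2 by auto
    show "\<forall>e\<in>E1 \<union> E2. ends e \<noteq> {}" using s1 s2 es by blast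
    show "V1 \<inter> V2 = {}" using s1 s2 by auto
  qed (use H1 H2 h1 h2 in \<open>auto simp: is_certificate_def\<close>)
  have sg: "subgraph ends (V1 \<union> V2, E1 \<union> E2) (induced ends G ((C1 \<union> C2) \<union> (F1 \<union> F2)))"
    using s1 s2 unfolding subgraph_def by auto
  have cert: "is_certificate ends (induced ends G ((C1 \<union> C2) \<union> (F1 \<union> F2))) (C1 \<union> C2) z (V1 \<union> V2, E1 \<union> E2)"
    using U sg unfolding is_certificate_def by blast
  have "card (C1 \<union> C2) \<le> fvs ends (induced ends G ((C1 \<union> C2) \<union> (F1 \<union> F2)))"
    using cert_antler[OF cert] finV by simp
  thus ?thesis using fvc cert unfolding is_z_antler_def is_antler_def by blast
qed

theorem proposition27:
  fixes ends :: "'e \<Rightarrow> 'v set" and G :: "('v,'e) mgraph" and z :: nat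
    and Cs Fs :: "'v set list"
  assumes "wf_mgraph ends G"
    and "is_z_antler_seq ends z G Cs Fs"
  shows "\<forall>i. 1 \<le> i \<and> i \<le> length Cs \<longrightarrow>
           is_z_antler ends z G (\<Union>j<i. Cs ! j) (\<Union>j<i. Fs ! j)"
proof (intro allI impI)
  fix i assume "1 \<le> i \<and> i \<le> length Cs"
  thus "is_z_antler ends z G (\<Union>j<i. Cs ! j) (\<Union>j<i. Fs ! j)"
  proof (induction i)
    case 0 then show ?case by simp
  next
    case (Suc i)
    have seq: "is_z_antler ends z (remove ends G (\<Union>j<i. Cs ! j \<union> Fs ! j)) (Cs ! i) (Fs ! i)"
      using assms(2) Suc.prems unfolding is_z_antler_seq_def by auto
    show ?case
    proof (cases "i = 0")
      case True
      moreover have "{..<Suc 0} = {0::nat}" by auto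
      ultimately show ?thesis using seq remove_empty[OF assms(1)] by simp
    next
      case False
      hence IH: "is_z_antler ends z G (\<Union>j<i. Cs ! j) (\<Union>j<i. Fs ! j)" using Suc by simp
      have "(\<Union>j<i. Cs ! j \<union> Fs ! j) = (\<Union>j<i. Cs ! j) \<union> (\<Union>j<i. Fs ! j)" by blast
      hence "is_z_antler ends z G ((\<Union>j<i. Cs ! j) \<union> Cs ! i) ((\<Union>j<i. Fs ! j) \<union> Fs ! i)"
        using combine[OF assms(1) IH] seq by simp
      moreover have "(\<Union>j<Suc i. Cs ! j) = (\<Union>j<i. Cs ! j) \<union> Cs ! i"
        "(\<Union>j<Suc i. Fs ! j) = (\<Union>j<i. Fs ! j) \<union> Fs ! i" by (auto simp: lessThan_Suc)
      ultimately show ?thesis by simp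
    qed
  qed
qed

end
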